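(* Let $q\ge 2$, $n\ge1$, $d_X\ge1$, $d_Z\ge 1$ be integers, and let $C\subseteq\{0,1,\dots,q-1\}^n$ be a classical code with minimum Hamming distance at least $d_X$ and with $|C|\ge 2V_q(d_Z-1)$. Enumerate $C=\{{\bf c}_1,\dots,{\bf c}_m\}$ and let $A$ be the real matrix with $m$ columns whose rows are: one row of all ones; and, for each ${\bf z}\in\{0,\dots,q-1\}^n$ with $1\le\mathrm{wt}({\bf z})\le d_Z-1$, the two rows with $k$-th entries $\cos(2\pi\,{\bf z}^T{\bf c}_k/q)$ and $\sin(2\pi\,{\bf z}^T{\bf c}_k/q)$. Then $A$ has a nonzero real kernel vector, and for every nonzero ${\bf x}\in\ker(A)\subseteq\mathbb{R}^m$, setting $x_k^+=\max\{x_k,0\}$, $x_k^-=\max\{-x_k,0\}$, $x=\sum_k x_k^+$ and $$|0_L\rangle=\frac{1}{\sqrt{x}}\sum_{k=1}^m\sqrt{x_k^+}\,|{\bf c}_k\rangle,\qquad |1_L\rangle=\frac{1}{\sqrt{x}}\sum_{k=1}^m\sqrt{x_k^-}\,|{\bf c}_k\rangle,$$ the span of $|0_L\rangle,|1_L\rangle$ is a quantum code encoding one logical qubit with bit-flip distance $d_X$ and phase-flip distance $d_Z$; that is, $|0_L\rangle,|1_L\rangle$ are orthonormal, supported on disjoint subsets of $C$, and for every generalized Pauli operator $P=X^{\bf a}Z^{\bf b}$ with $\mathrm{wt}({\bf a})\le d_X-1$ and $\mathrm{wt}({\bf b})\le d_Z-1$ there is a constant $c_P\in\mathbb{C}$ with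 $\langle i_L|P|j_L\rangle=c_P\,\delta_{ij}$ for all $i,j\in\{0,1\}$.
   Context: Let $\omega=e^{2\pi i/q}$. On $\mathbb{C}^q$ with orthonormal basis $|0\rangle,\dots,|q-1\rangle$, $Z=\sum_{j=0}^{q-1}\omega^j|j\rangle\langle j|$ and $X=\sum_{j\in\mathbb{Z}_q}|j\rangle\langle j+1|$ (indices mod $q$). For ${\bf a},{\bf b}\in\{0,\dots,q-1\}^n$, $X^{\bf a}Z^{\bf b}=\bigotimes_{i=1}^n X^{a_i}Z^{b_i}$; $\mathrm{wt}$ denotes Hamming weight. For ${\bf c}\in\{0,\dots,q-1\}^n$, $|{\bf c}\rangle=|c_1\rangle\otimes\cdots\otimes|c_n\rangle$ and ${\bf z}^T{\bf c}=\sum_iz_ic_i$. $V_q(r)=\sum_{w=0}^r\binom{n}{w}(q-1)^w$ is the volume of the $q$-ary Hamming ball of radius $r$. *)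

theory Defs
  imports Complex_Main
begin

text \<open>Words in {0,...,q-1}^n, represented as functions nat => nat that are
  zero outside the index range {0..<n}.\<close>
definition words :: "nat \<Rightarrow> nat \<Rightarrow> (nat \<Rightarrow> nat) set" where
  "words q n = {c. (\<forall>i<n. c i < q) \<and> (\<forall>i\<ge>n. c i = 0)}"

definition wt :: "nat \<Rightarrow> (nat \<Rightarrow> nat) \<Rightarrow> nat" where
  "wt n z = card {i\<in>{0..<n}. z i \<noteq> 0}"

definition hdist :: "nat \<Rightarrow> (nat \<Rightarrow> nat) \<Rightarrow> (nat \<Rightarrow> nat) \<Rightarrow> nat" where
  "hdist n c c' = card {i\<in>{0..<n}. c i \<noteq> c' i}"

definition min_dist_ge :: "nat \<Rightarrow> (nat \<Rightarrow> nat) set \<Rightarrow> nat \<Rightarrow> bool" where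
  "min_dist_ge n C d = (\<forall>c\<in>C. \<forall>c'\<in>C. c \<noteq> c' \<longrightarrow> d \<le> hdist n c c')"

definition Vq :: "nat \<Rightarrow> nat \<Rightarrow> nat \<Rightarrow> nat" where
  "Vq q n r = (\<Sum>w=0..r. (n choose w) * (q - 1) ^ w)"

definition dotp :: "nat \<Rightarrow> (nat \<Rightarrow> nat) \<Rightarrow> (nat \<Rightarrow> nat) \<Rightarrow> nat" where
  "dotp n z c = (\<Sum>i<n. z i * c i)"

text \<open>x (indexed by 0..<m, m = length cs, cs the enumeration of C) lies in the
  kernel of the matrix A: all-ones row, and the cos/sin rows for each z with
  1 <= wt z <= dZ - 1.\<close>
definition in_ker_A :: "nat \<Rightarrow> nat \<Rightarrow> nat \<Rightarrow> (nat \<Rightarrow> nat) list \<Rightarrow> (nat \<Rightarrow> real) \<Rightarrow> bool" where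
  "in_ker_A q n dZ cs x \<longleftrightarrow>
     (\<Sum>k<length cs. x k) = 0 \<and>
     (\<forall>z\<in>words q n. 1 \<le> wt n z \<and> wt n z \<le> dZ - 1 \<longrightarrow>
        (\<Sum>k<length cs. cos (2 * pi * real (dotp n z (cs ! k)) / real q) * x k) = 0 \<and>
        (\<Sum>k<length cs. sin (2 * pi * real (dotp n z (cs ! k)) / real q) * x k) = 0)"

text \<open>States of (C^q)^{\<otimes> n}: functions from basis words to complex amplitudes.\<close>
type_synonym state = "(nat \<Rightarrow> nat) \<Rightarrow> complex"

definition inner_st :: "nat \<Rightarrow> nat \<Rightarrow> state \<Rightarrow> state \<Rightarrow> complex" where
  "inner_st q n \<phi> \<psi> = (\<Sum>w\<in>words q n. cnj (\<phi> w) * \<psi> w)"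

definition xplus :: "(nat \<Rightarrow> real) \<Rightarrow> nat \<Rightarrow> real" where
  "xplus x k = max (x k) 0"

definition xminus :: "(nat \<Rightarrow> real) \<Rightarrow> nat \<Rightarrow> real" where
  "xminus x k = max (- x k) 0"

definition ket0L :: "(nat \<Rightarrow> nat) list \<Rightarrow> (nat \<Rightarrow> real) \<Rightarrow> state" where
  "ket0L cs x = (\<lambda>w. (\<Sum>k<length cs. if cs ! k = w then
      complex_of_real (sqrt (xplus x k) / sqrt (\<Sum>j<length cs. xplus x j)) else 0))"

definition ket1L :: "(nat \<Rightarrow> nat) list \<Rightarrow> (nat \<Rightarrow> real) \<Rightarrow> state" where
  "ket1L cs x = (\<lambda>w. (\<Sum>k<length cs. if cs ! k = w then
      complex_of_real (sqrt (xminus x k) / sqrt (\<Sum>j<length cs. xplus x j)) else 0))"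

text \<open>Single-qudit q x q matrices, as functions on indices {0..<q}.\<close>
definition omega :: "nat \<Rightarrow> complex" where
  "omega q = cis (2 * pi / real q)"

definition Zmat :: "nat \<Rightarrow> nat \<Rightarrow> nat \<Rightarrow> complex" where
  "Zmat q i j = (if i = j then omega q ^ j else 0)"

definition Xmat :: "nat \<Rightarrow> nat \<Rightarrow> nat \<Rightarrow> complex" where
  "Xmat q i j = (if j = (i + 1) mod q then 1 else 0)"

definition mmult :: "nat \<Rightarrow> (nat \<Rightarrow> nat \<Rightarrow> complex) \<Rightarrow> (nat \<Rightarrow> nat \<Rightarrow> complex) \<Rightarrow> nat \<Rightarrow> nat \<Rightarrow> complex" where
  "mmult q A B = (\<lambda>i j. \<Sum>k<q. A i k * B k j)"

fun mpow :: "nat \<Rightarrow> (nat \<Rightarrow> nat \<Rightarrow> complex) \<Rightarrow> nat \<Rightarrow> nat \<Rightarrow> nat \<Rightarrow> complex" where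
  "mpow q A 0 = (\<lambda>i j. if i = j then 1 else 0)"
| "mpow q A (Suc k) = mmult q (mpow q A k) A"

text \<open>Matrix entry <u| X^a Z^b |v> of the tensor product operator.\<close>
definition pauli_entry :: "nat \<Rightarrow> nat \<Rightarrow> (nat \<Rightarrow> nat) \<Rightarrow> (nat \<Rightarrow> nat) \<Rightarrow> (nat \<Rightarrow> nat) \<Rightarrow> (nat \<Rightarrow> nat) \<Rightarrow> complex" where
  "pauli_entry q n a b u v =
     (\<Prod>i<n. mmult q (mpow q (Xmat q) (a i)) (mpow q (Zmat q) (b i)) (u i) (v i))"

definition pauli_mel :: "nat \<Rightarrow> nat \<Rightarrow> (nat \<Rightarrow> nat) \<Rightarrow> (nat \<Rightarrow> nat) \<Rightarrow> state \<Rightarrow> state \<Rightarrow> complex" where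
  "pauli_mel q n a b \<phi> \<psi> =
     (\<Sum>u\<in>words q n. \<Sum>v\<in>words q n. cnj (\<phi> u) * pauli_entry q n a b u v * \<psi> v)"

end

theory Submission
  imports Defs "HOL-Library.FuncSet"
begin


lemma lin_sol:
  fixes eqs :: "(nat \<Rightarrow> real) list"
  shows "finite K \<Longrightarrow> length eqs < card K \<Longrightarrow>
    \<exists>x. (\<forall>k. k \<notin> K \<longrightarrow> x k = 0) \<and> (\<exists>k\<in>K. x k \<noteq> 0) \<and>
        (\<forall>e\<in>set eqs. (\<Sum>k\<in>K. e k * x k) = 0)"
proof (induction "length eqs" arbitrary: eqs K)
  case 0
  then obtain k where "k \<in> K" by fastforce
  then show ?case using 0 by (intro exI[of _ "\<lambda>j. if j = k then 1 else 0"]) (simp add: if_distrib cong: if_cong)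
next
  case (Suc N)
  then obtain e es where eqs: "eqs = e # es" by (cases eqs) auto
  have lenes: "length es = N" using Suc eqs by simp
  have IH: "\<exists>x. (\<forall>k. k \<notin> K \<longrightarrow> x k = 0) \<and> (\<exists>k\<in>K. x k \<noteq> 0) \<and>
        (\<forall>e\<in>set fs. (\<Sum>k\<in>K. e k * x k) = 0)"
    if "length fs = N" "finite K" "length fs < card K" for K and fs :: "(nat \<Rightarrow> real) list" using Suc.hyps(1)[of fs K] that by simp
  have prems: "finite K" "Suc (length es) < card K" using Suc eqs by auto
  show ?case
  proof (cases "\<forall>k\<in>K. e k = 0")
    case True
    from IH[of es K] prems lenes obtain x where
      x: "\<forall>k. k \<notin> K \<longrightarrow> x k = 0" "\<exists>k\<in>K. x k \<noteq> 0" "\<forall>f\<in>set es. (\<Sum>k\<in>K. f k * x k) = 0" by auto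
    show ?thesis using x True eqs by (intro exI[of _ x]) auto
  next
    case False
    then obtain k0 where k0: "k0 \<in> K" "e k0 \<noteq> 0" by auto
    define K' where "K' = K - {k0}"
    have cK': "card K' = card K - 1" using k0 prems unfolding K'_def by auto
    define es' where "es' = map (\<lambda>f k. f k - f k0 * e k / e k0) es"
    have "length es' < card K'" using cK' prems unfolding es'_def by auto
    then obtain y where y: "\<forall>k. k \<notin> K' \<longrightarrow> y k = 0" "\<exists>k\<in>K'. y k \<noteq> 0"
       "\<forall>f\<in>set es'. (\<Sum>k\<in>K'. f k * y k) = 0"
      using IH[of es' K'] prems lenes \<open>length es' < card K'\<close> unfolding es'_def K'_def by auto
    define x where "x = (\<lambda>k. if k = k0 then - (\<Sum>j\<in>K'. e j * y j) / e k0 else y k)"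
    have fin: "finite K'" using prems unfolding K'_def by auto
    have split: "(\<Sum>k\<in>K. f k * x k) = f k0 * x k0 + (\<Sum>k\<in>K'. f k * y k)" for f
    proof -
      have "(\<Sum>k\<in>K. f k * x k) = f k0 * x k0 + (\<Sum>k\<in>K'. f k * x k)"
        using k0 prems unfolding K'_def by (simp add: sum.remove)
      moreover have "(\<Sum>k\<in>K'. f k * x k) = (\<Sum>k\<in>K'. f k * y k)"
        unfolding x_def K'_def by (intro sum.cong) auto
      ultimately show ?thesis by simp
    qed
    have "(\<Sum>k\<in>K. e k * x k) = 0" using k0 unfolding split by (simp add: x_def)
    moreover have "(\<Sum>k\<in>K. f k * x k) = 0" if "f \<in> set es" for f
    proof -
      have "(\<lambda>k. f k - f k0 * e k / e k0) \<in> set es'" using that unfolding es'_def by auto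
      from bspec[OF y(3) this] have h: "(\<Sum>k\<in>K'. (f k - f k0 * e k / e k0) * y k) = 0" by simp
      have "(\<Sum>k\<in>K'. (f k - f k0 * e k / e k0) * y k) =
            (\<Sum>k\<in>K'. f k * y k) - f k0 / e k0 * (\<Sum>k\<in>K'. e k * y k)"
        by (simp add: algebra_simps sum_subtractf sum_distrib_left)
      then show ?thesis using h unfolding split by (simp add: x_def)
    qed
    moreover have "\<forall>k. k \<notin> K \<longrightarrow> x k = 0" using y(1) k0 unfolding x_def K'_def by auto
    moreover have "\<exists>k\<in>K. x k \<noteq> 0" using y(2) unfolding x_def K'_def by auto
    ultimately show ?thesis using eqs by (intro exI[of _ x]) auto
  qed
qed



lemma ifz1: "(if c then (a::complex) else 0) * b = (if c then a * b else 0)" by simp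
lemma ifz2: "b * (if c then (a::complex) else 0) = (if c then b * a else 0)" by simp

lemma mpow_X: "i < q \<Longrightarrow> mpow q (Xmat q) a i j = (if j = (i + a) mod q then 1 else 0)"
proof (induction a arbitrary: j)
  case 0
  then show ?case by simp
next
  case (Suc a)
  have q0: "q > 0" using Suc by simp
  have "mpow q (Xmat q) (Suc a) i j = (\<Sum>k<q. (if k = (i + a) mod q then 1 else 0) * Xmat q k j)"
    using Suc by (simp add: mmult_def)
  also have "\<dots> = Xmat q ((i + a) mod q) j"
    using q0 by (simp add: ifz1 ifz2)
  also have "\<dots> = (if j = (i + Suc a) mod q then 1 else 0)"
    by (simp add: Xmat_def mod_Suc_eq)
  finally show ?case .
qed

lemma mpow_Z: "k < q \<Longrightarrow> mpow q (Zmat q) b k j = (if k = j then omega q ^ (b * j) else 0)"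
proof (induction b arbitrary: j)
  case 0
  then show ?case by simp
next
  case (Suc b)
  have "mpow q (Zmat q) (Suc b) k j = (\<Sum>l<q. (if k = l then omega q ^ (b * l) else 0) * Zmat q l j)"
    using Suc by (simp add: mmult_def)
  also have "\<dots> = omega q ^ (b * k) * Zmat q k j"
    using Suc by (simp add: ifz1 ifz2)
  also have "\<dots> = (if k = j then omega q ^ (Suc b * j) else 0)"
    by (simp add: Zmat_def power_add mult.commute)
  finally show ?case .
qed

lemma XZ_entry: "u < q \<Longrightarrow> v < q \<Longrightarrow>
  mmult q (mpow q (Xmat q) a) (mpow q (Zmat q) b) u v = (if v = (u + a) mod q then omega q ^ (b * v) else 0)"
proof -
  assume u: "u < q" and v: "v < q"
  have "mmult q (mpow q (Xmat q) a) (mpow q (Zmat q) b) u v =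
     (\<Sum>k<q. (if k = (u + a) mod q then 1 else 0) * (if k = v then omega q ^ (b * v) else 0))"
    unfolding mmult_def using u by (intro sum.cong) (auto simp: mpow_X mpow_Z)
  also have "\<dots> = (if v = (u + a) mod q then omega q ^ (b * v) else 0)"
    using v by (simp add: ifz1 ifz2)
  finally show ?thesis .
qed

lemma pauli_entry_eq:
  assumes "u \<in> words q n" "v \<in> words q n"
  shows "pauli_entry q n a b u v =
    (if (\<forall>i<n. v i = (u i + a i) mod q) then omega q ^ dotp n b v else 0)"
proof -
  have "pauli_entry q n a b u v = (\<Prod>i<n. if v i = (u i + a i) mod q then omega q ^ (b i * v i) else 0)"
    unfolding pauli_entry_def using assms by (intro prod.cong) (auto simp: words_def XZ_entry)
  also have "\<dots> = (if (\<forall>i<n. v i = (u i + a i) mod q) then omega q ^ dotp n b v else 0)"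
  proof (cases "\<forall>i<n. v i = (u i + a i) mod q")
    case True
    then show ?thesis by (simp add: dotp_def power_sum)
  next
    case False
    then obtain i where "i < n" "v i \<noteq> (u i + a i) mod q" by auto
    then show ?thesis using False by (auto intro!: prod_zero)
  qed
  finally show ?thesis .
qed



lemma finite_words: "finite (words q n)"
proof (rule finite_subset)
  show "words q n \<subseteq> {f. \<forall>x. (x \<in> {..<n} \<longrightarrow> f x \<in> {..<q}) \<and> (x \<notin> {..<n} \<longrightarrow> f x = 0)}"
  proof
    fix f assume "f \<in> words q n"
    then have "\<forall>i<n. f i < q" "\<forall>i\<ge>n. f i = 0" unfolding words_def by auto
    then show "f \<in> {f. \<forall>x. (x \<in> {..<n} \<longrightarrow> f x \<in> {..<q}) \<and> (x \<notin> {..<n} \<longrightarrow> f x = 0)}"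
      by (simp add: not_less)
  qed
  show "finite {f. \<forall>x. (x \<in> {..<n} \<longrightarrow> f x \<in> {..<q}) \<and> (x \<notin> {..<n} \<longrightarrow> f x = (0::nat))}"
    by (rule finite_set_of_finite_funs) auto
qed

lemma card_wt_eq: "card {z\<in>words q n. wt n z = w} \<le> (n choose w) * (q - 1) ^ w"
proof -
  define f where "f = (\<lambda>z::nat\<Rightarrow>nat. ({i\<in>{0..<n}. z i \<noteq> 0}, restrict z {i\<in>{0..<n}. z i \<noteq> 0}))"
  define T where "T = Sigma {S. S \<subseteq> {0..<n} \<and> card S = w} (\<lambda>S. S \<rightarrow>\<^sub>E {1..<q})"
  have inj: "inj_on f {z\<in>words q n. wt n z = w}"
  proof (rule inj_onI)
    fix z z' assume z: "z \<in> {z\<in>words q n. wt n z = w}" and z': "z' \<in> {z\<in>words q n. wt n z = w}"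
      and eq: "f z = f z'"
    show "z = z'"
    proof
      fix i
      show "z i = z' i"
      proof (cases "i < n")
        case False
        have "z \<in> words q n" "z' \<in> words q n" using z z' by simp_all
        then have "z i = 0" "z' i = 0" using False unfolding words_def by (simp_all add: not_less)
        then show ?thesis by simp
      next
        case True
        obtain S: "{i\<in>{0..<n}. z i \<noteq> 0} = {i\<in>{0..<n}. z' i \<noteq> 0}"
          and R: "restrict z {i\<in>{0..<n}. z i \<noteq> 0} = restrict z' {i\<in>{0..<n}. z' i \<noteq> 0}"
          using eq[unfolded f_def] by (erule Pair_inject)
        show ?thesis
        proof (cases "z i = 0")
          case True
          then have "i \<notin> {i\<in>{0..<n}. z' i \<noteq> 0}" using S by blast
          then show ?thesis using True \<open>i < n\<close> by auto
        next
          case False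
          then have i1: "i \<in> {i\<in>{0..<n}. z i \<noteq> 0}" using \<open>i < n\<close> by simp
          then have i2: "i \<in> {i\<in>{0..<n}. z' i \<noteq> 0}" using S by (simp only:)
          have "z i = restrict z {i\<in>{0..<n}. z i \<noteq> 0} i" using i1 by (simp only: restrict_apply')
          also have "\<dots> = restrict z' {i\<in>{0..<n}. z' i \<noteq> 0} i" using R by (rule fun_cong)
          also have "\<dots> = z' i" using i2 by (simp only: restrict_apply')
          finally show ?thesis .
        qed
      qed
    qed
  qed
  have sub: "f ` {z\<in>words q n. wt n z = w} \<subseteq> T"
  proof (rule image_subsetI)
    fix z assume z: "z \<in> {z\<in>words q n. wt n z = w}"
    define S where "S = {i\<in>{0..<n}. z i \<noteq> 0}"
    have "card S = w" using z unfolding S_def wt_def by simp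
    moreover have "S \<subseteq> {0..<n}" unfolding S_def by blast
    moreover have "restrict z S \<in> S \<rightarrow>\<^sub>E {1..<q}"
    proof (rule restrict_PiE_iff[THEN iffD2], rule ballI)
      fix i assume i: "i \<in> S"
      have "z \<in> words q n" using z by simp
      then have "z i < q" using i unfolding S_def words_def by auto
      then show "z i \<in> {1..<q}" using i unfolding S_def by auto
    qed
    ultimately show "f z \<in> T" unfolding f_def T_def S_def[symmetric] by blast
  qed
  have finT: "finite T" unfolding T_def
    by (intro finite_SigmaI finite_PiE) (auto intro: finite_subset)
  have cT: "card T = (n choose w) * (q - 1) ^ w"
  proof -
    have fS: "finite {S. S \<subseteq> {0..<n} \<and> card S = w}" by auto
    have "card T = (\<Sum>S\<in>{S. S \<subseteq> {0..<n} \<and> card S = w}. card (S \<rightarrow>\<^sub>E {1..<q}))"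
      unfolding T_def using fS by (subst card_SigmaI) (auto intro!: finite_PiE intro: finite_subset)
    also have "\<dots> = (\<Sum>S\<in>{S. S \<subseteq> {0..<n} \<and> card S = w}. (q - 1) ^ w)"
    proof (intro sum.cong refl)
      fix S assume "S \<in> {S. S \<subseteq> {0..<n} \<and> card S = w}"
      then have "finite S" "card S = w" using finite_subset by auto
      then show "card (S \<rightarrow>\<^sub>E {1..<q}) = (q - 1) ^ w" by (simp add: card_PiE)
    qed
    also have "\<dots> = (n choose w) * (q - 1) ^ w"
      using n_subsets[of "{0..<n}" w] by simp
    finally show ?thesis .
  qed
  have "card {z\<in>words q n. wt n z = w} = card (f ` {z\<in>words q n. wt n z = w})"
    using inj by (simp add: card_image)
  also have "\<dots> \<le> card T" using sub finT by (rule card_mono[rotated])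
  finally show ?thesis using cT by simp
qed

lemma ball_card: "card {z\<in>words q n. wt n z \<le> r} \<le> Vq q n r"
proof -
  have "{z\<in>words q n. wt n z \<le> r} = (\<Union>w\<in>{0..r}. {z\<in>words q n. wt n z = w})" by auto
  then have "card {z\<in>words q n. wt n z \<le> r} \<le> (\<Sum>w=0..r. card {z\<in>words q n. wt n z = w})"
    using card_UN_le[of "{0..r}" "\<lambda>w. {z\<in>words q n. wt n z = w}"] by simp
  also have "\<dots> \<le> Vq q n r" unfolding Vq_def by (intro sum_mono card_wt_eq)
  finally show ?thesis .
qed



lemma kval: "distinct cs \<Longrightarrow> k < length cs \<Longrightarrow>
   (\<Sum>j<length cs. if cs ! j = cs ! k then g j else 0) = (g k :: complex)"
proof -
  assume d: "distinct cs" and k: "k < length cs"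
  have "(\<Sum>j<length cs. if cs ! j = cs ! k then g j else 0) = (\<Sum>j<length cs. if j = k then g j else 0)"
    using d k by (intro sum.cong refl) (auto simp: nth_eq_iff_index_eq)
  also have "\<dots> = g k" using k by simp
  finally show ?thesis .
qed

lemma knot: "w \<notin> set cs \<Longrightarrow> (\<Sum>j<length cs. if cs ! j = w then g j else 0) = (0::complex)"
  by (intro sum.neutral) auto

lemma sumconv:
  assumes "set cs \<subseteq> W" "finite W" "distinct cs" "\<forall>w\<in>W - set cs. F w = 0"
  shows "(\<Sum>w\<in>W. F w) = (\<Sum>k<length cs. F (cs ! k) :: complex)"
proof -
  have "(\<Sum>w\<in>W. F w) = (\<Sum>w\<in>set cs. F w)"
    using assms by (intro sum.mono_neutral_right) auto
  also have "\<dots> = sum_list (map F cs)" using assms(3) by (simp add: sum_list_distinct_conv_sum_set)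
  also have "\<dots> = (\<Sum>k<length cs. F (cs ! k))"
    by (simp add: sum_list_sum_nth atLeast0LessThan)
  finally show ?thesis .
qed

lemma omega_pow: "omega q ^ d = cis (2 * pi * real d / real q)"
  unfolding omega_def DeMoivre by (simp add: field_simps)

lemma ker_complex:
  fixes x :: "nat \<Rightarrow> real"
  assumes "(\<Sum>k<m. cos (t k) * x k) = 0" "(\<Sum>k<m. sin (t k) * x k) = 0"
  shows "(\<Sum>k<m. complex_of_real (x k) * cis (t k)) = 0"
  using assms by (intro complex_eqI) (simp_all add: Re_sum Im_sum mult.commute)

lemma pauli_zero:
  assumes words: "\<And>w. \<phi> w \<noteq> 0 \<Longrightarrow> w \<in> C" "\<And>w. \<psi> w \<noteq> 0 \<Longrightarrow> w \<in> C"
    and md: "min_dist_ge n C dX" and a: "a \<in> words q n" "wt n a \<le> dX - 1" "1 \<le> wt n a"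
    and pe: "\<And>u v. u \<in> words q n \<Longrightarrow> v \<in> words q n \<Longrightarrow> pauli_entry q n a b u v =
       (if (\<forall>i<n. v i = (u i + a i) mod q) then omega q ^ dotp n b v else 0)"
  shows "pauli_mel q n a b \<phi> \<psi> = 0"
  unfolding pauli_mel_def
proof (intro sum.neutral ballI)
  fix u v assume u: "u \<in> words q n" and v: "v \<in> words q n"
  show "cnj (\<phi> u) * pauli_entry q n a b u v * \<psi> v = 0"
  proof (rule ccontr)
    assume ne: "cnj (\<phi> u) * pauli_entry q n a b u v * \<psi> v \<noteq> 0"
    then have uC: "u \<in> C" and vC: "v \<in> C" using words by auto
    from ne have sh: "\<forall>i<n. v i = (u i + a i) mod q" using pe[OF u v] by (auto split: if_splits)
    have "{i\<in>{0..<n}. a i \<noteq> 0} \<noteq> {}" using a(3) unfolding wt_def by (metis card.empty not_one_le_zero)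
    then obtain i where i: "i < n" "a i \<noteq> 0" by auto
    have ai: "a i < q" "u i < q" using i u a(1) by (auto simp: words_def)
    have "v i \<noteq> u i"
    proof
      assume "v i = u i"
      then have e: "(u i + a i) mod q = u i" using sh i by simp
      show False
      proof (cases "u i + a i < q")
        case True then show False using e i by simp
      next
        case False
        then have "(u i + a i) mod q = u i + a i - q" using ai
          by (simp add: le_mod_geq mod_less)
        then show False using e ai False by arith
      qed
    qed
    then have "u \<noteq> v" by auto
    then have "dX \<le> hdist n u v" using md uC vC unfolding min_dist_ge_def by blast
    moreover have "hdist n u v \<le> wt n a"
      unfolding hdist_def wt_def
    proof (rule card_mono)
      show "{i \<in> {0..<n}. u i \<noteq> v i} \<subseteq> {i \<in> {0..<n}. a i \<noteq> 0}"
      proof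
        fix j assume j: "j \<in> {i \<in> {0..<n}. u i \<noteq> v i}"
        have "u j < q" using j u by (auto simp: words_def)
        then show "j \<in> {i \<in> {0..<n}. a i \<noteq> 0}" using j sh by (cases "a j = 0") auto
      qed
    qed auto
    ultimately show False using a(2) \<open>1 \<le> wt n a\<close> by linarith
  qed
qed

lemma pauli_diag:
  assumes a: "\<forall>i<n. a i = 0"
    and pe: "\<And>u v. u \<in> words q n \<Longrightarrow> v \<in> words q n \<Longrightarrow> pauli_entry q n a b u v =
       (if (\<forall>i<n. v i = (u i + a i) mod q) then omega q ^ dotp n b v else 0)"
  shows "pauli_mel q n a b \<phi> \<psi> = (\<Sum>u\<in>words q n. cnj (\<phi> u) * \<psi> u * omega q ^ dotp n b u)"
  unfolding pauli_mel_def
proof (intro sum.cong refl)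
  fix u assume u: "u \<in> words q n"
  have "(\<Sum>v\<in>words q n. cnj (\<phi> u) * pauli_entry q n a b u v * \<psi> v) =
        (\<Sum>v\<in>words q n. if v = u then cnj (\<phi> u) * \<psi> u * omega q ^ dotp n b u else 0)"
  proof (intro sum.cong refl)
    fix v assume v: "v \<in> words q n"
    have "(\<forall>i<n. v i = (u i + a i) mod q) \<longleftrightarrow> v = u"
    proof
      assume h: "\<forall>i<n. v i = (u i + a i) mod q"
      show "v = u"
      proof
        fix i show "v i = u i"
          using h a u v by (cases "i < n") (auto simp: words_def)
      qed
    next
      assume "v = u" then show "\<forall>i<n. v i = (u i + a i) mod q" using a u by (auto simp: words_def)
    qed
    then show "cnj (\<phi> u) * pauli_entry q n a b u v * \<psi> v =
        (if v = u then cnj (\<phi> u) * \<psi> u * omega q ^ dotp n b u else 0)"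
      using pe[OF u v] by auto
  qed
  also have "\<dots> = cnj (\<phi> u) * \<psi> u * omega q ^ dotp n b u"
    using u finite_words by (simp add: sum.delta)
  finally show "(\<Sum>v\<in>words q n. cnj (\<phi> u) * pauli_entry q n a b u v * \<psi> v) = cnj (\<phi> u) * \<psi> u * omega q ^ dotp n b u" .
qed



lemma sqdiv: "0 \<le> p \<Longrightarrow> 0 \<le> r \<Longrightarrow> 0 \<le> X \<Longrightarrow> sqrt p / sqrt X * (sqrt r / sqrt X) = sqrt (p * r) / X"
  by (simp add: real_sqrt_mult)

lemma sqc: "0 \<le> p \<Longrightarrow> 0 < X \<Longrightarrow>
  cnj (complex_of_real (sqrt p / sqrt X)) * complex_of_real (sqrt p / sqrt X) = complex_of_real (p / X)"
proof -
  assume "0 \<le> p" "0 < X"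
  then have "sqrt p / sqrt X * (sqrt p / sqrt X) = p / X" by (simp add: real_sqrt_mult flip: real_sqrt_divide)
  then show ?thesis by (metis complex_cnj_complex_of_real of_real_mult)
qed

lemma part2:
  fixes x :: "nat \<Rightarrow> real"
  assumes q2: "q \<ge> 2" and CW: "C \<subseteq> words q n" and md: "min_dist_ge n C dX"
    and dist: "distinct cs" and setC: "set cs = C"
    and nz: "\<exists>k<length cs. x k \<noteq> 0" and ker: "in_ker_A q n dZ cs x"
  shows "inner_st q n (ket0L cs x) (ket0L cs x) = 1 \<and>
      inner_st q n (ket1L cs x) (ket1L cs x) = 1 \<and>
      inner_st q n (ket0L cs x) (ket1L cs x) = 0 \<and>
      {w. ket0L cs x w \<noteq> 0} \<subseteq> C \<and> {w. ket1L cs x w \<noteq> 0} \<subseteq> C \<and>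
      {w. ket0L cs x w \<noteq> 0} \<inter> {w. ket1L cs x w \<noteq> 0} = {} \<and>
      (\<forall>a\<in>words q n. \<forall>b\<in>words q n. wt n a \<le> dX - 1 \<and> wt n b \<le> dZ - 1 \<longrightarrow>
         (\<exists>cP::complex. \<forall>i\<in>{0::nat,1}. \<forall>j\<in>{0::nat,1}.
            pauli_mel q n a b (if i = 0 then ket0L cs x else ket1L cs x)
                              (if j = 0 then ket0L cs x else ket1L cs x)
            = cP * (if i = j then 1 else 0)))"
proof -
  define m where "m = length cs"
  define p where "p = xplus x"
  define mi where "mi = xminus x"
  define X where "X = (\<Sum>j<m. p j)"
  have p0: "p k \<ge> 0" "mi k \<ge> 0" for k unfolding p_def mi_def xplus_def xminus_def by auto
  have xpm: "x k = p k - mi k" for k unfolding p_def mi_def xplus_def xminus_def by auto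
  have pmi: "p k * mi k = 0" for k unfolding p_def mi_def xplus_def xminus_def by auto
  have sumx: "(\<Sum>k<m. x k) = 0" using ker unfolding in_ker_A_def m_def by auto
  have Xpos: "X > 0"
  proof (rule ccontr)
    assume "\<not> X > 0"
    then have "X = 0" using p0 unfolding X_def by (meson not_less order_antisym sum_nonneg)
    then have "\<forall>k\<in>{..<m}. p k = 0" unfolding X_def using p0 by (subst sum_nonneg_eq_0_iff[symmetric]) auto
    then have xle: "\<forall>k\<in>{..<m}. - x k \<ge> 0" using xpm p0 by auto
    have "(\<Sum>k<m. - x k) = 0" using sumx by (simp add: sum_negf)
    then have "\<forall>k\<in>{..<m}. - x k = 0" using xle by (subst sum_nonneg_eq_0_iff[symmetric]) auto
    then show False using nz unfolding m_def by auto
  qed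
  have summi: "(\<Sum>j<m. mi j) = X"
    using sumx unfolding X_def xpm by (simp add: sum_subtractf)
  have k0def: "ket0L cs x = (\<lambda>w. \<Sum>k<m. if cs ! k = w then complex_of_real (sqrt (p k) / sqrt X) else 0)"
    unfolding ket0L_def m_def X_def p_def by simp
  have k1def: "ket1L cs x = (\<lambda>w. \<Sum>k<m. if cs ! k = w then complex_of_real (sqrt (mi k) / sqrt X) else 0)"
    unfolding ket1L_def m_def X_def p_def mi_def by simp
  have k0v: "ket0L cs x (cs ! k) = complex_of_real (sqrt (p k) / sqrt X)" if "k < m" for k
    unfolding k0def using kval[OF dist, of k] that unfolding m_def by simp
  have k1v: "ket1L cs x (cs ! k) = complex_of_real (sqrt (mi k) / sqrt X)" if "k < m" for k
    unfolding k1def using kval[OF dist, of k] that unfolding m_def by simp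
  have k0n: "ket0L cs x w = 0" if "w \<notin> set cs" for w
    unfolding k0def using knot[OF that] unfolding m_def by simp
  have k1n: "ket1L cs x w = 0" if "w \<notin> set cs" for w
    unfolding k1def using knot[OF that] unfolding m_def by simp
  have csW: "set cs \<subseteq> words q n" using CW setC by simp
  note sc = sumconv[OF csW finite_words dist, unfolded m_def[symmetric]]
  have I00: "inner_st q n (ket0L cs x) (ket0L cs x) = 1"
  proof -
    have "inner_st q n (ket0L cs x) (ket0L cs x) = (\<Sum>k<m. cnj (ket0L cs x (cs ! k)) * ket0L cs x (cs ! k))"
      unfolding inner_st_def by (rule sc) (auto simp: k0n)
    also have "\<dots> = (\<Sum>k<m. complex_of_real (p k / X))"
      using p0 Xpos by (intro sum.cong refl) (simp only: lessThan_iff k0v sqc)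
    also have "\<dots> = complex_of_real (X / X)" by (metis X_def of_real_sum sum_divide_distrib)
    finally show ?thesis using Xpos by simp
  qed
  have I11: "inner_st q n (ket1L cs x) (ket1L cs x) = 1"
  proof -
    have "inner_st q n (ket1L cs x) (ket1L cs x) = (\<Sum>k<m. cnj (ket1L cs x (cs ! k)) * ket1L cs x (cs ! k))"
      unfolding inner_st_def by (rule sc) (auto simp: k1n)
    also have "\<dots> = (\<Sum>k<m. complex_of_real (mi k / X))"
      using p0 Xpos by (intro sum.cong refl) (simp only: lessThan_iff k1v sqc)
    also have "\<dots> = complex_of_real (X / X)" by (metis summi of_real_sum sum_divide_distrib)
    finally show ?thesis using Xpos by simp
  qed
  have I01: "inner_st q n (ket0L cs x) (ket1L cs x) = 0"
  proof -
    have "inner_st q n (ket0L cs x) (ket1L cs x) = (\<Sum>k<m. cnj (ket0L cs x (cs ! k)) * ket1L cs x (cs ! k))"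
      unfolding inner_st_def by (rule sc) (auto simp: k1n)
    also have "\<dots> = 0"
      using p0 pmi Xpos by (intro sum.neutral ballI) (simp add: k0v k1v sqdiv flip: of_real_mult)
    finally show ?thesis .
  qed
  have S0: "{w. ket0L cs x w \<noteq> 0} \<subseteq> C" using k0n setC by blast
  have S1: "{w. ket1L cs x w \<noteq> 0} \<subseteq> C" using k1n setC by blast
  have S01: "{w. ket0L cs x w \<noteq> 0} \<inter> {w. ket1L cs x w \<noteq> 0} = {}"
  proof (rule ccontr)
    assume "\<not> ?thesis"
    then obtain w where w: "ket0L cs x w \<noteq> 0" "ket1L cs x w \<noteq> 0" by auto
    then have "w \<in> set cs" using k0n by blast
    then obtain k where k: "k < m" "w = cs ! k" unfolding m_def by (auto simp: in_set_conv_nth)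
    then have "p k \<noteq> 0" "mi k \<noteq> 0" using w k0v k1v by auto
    then show False using pmi[of k] by simp
  qed
  have PP: "\<forall>a\<in>words q n. \<forall>b\<in>words q n. wt n a \<le> dX - 1 \<and> wt n b \<le> dZ - 1 \<longrightarrow>
         (\<exists>cP::complex. \<forall>i\<in>{0::nat,1}. \<forall>j\<in>{0::nat,1}.
            pauli_mel q n a b (if i = 0 then ket0L cs x else ket1L cs x)
                              (if j = 0 then ket0L cs x else ket1L cs x)
            = cP * (if i = j then 1 else 0))"
  proof (intro ballI impI)
    fix a b assume a: "a \<in> words q n" and b: "b \<in> words q n" and wab: "wt n a \<le> dX - 1 \<and> wt n b \<le> dZ - 1"
    have pe: "\<And>u v. u \<in> words q n \<Longrightarrow> v \<in> words q n \<Longrightarrow> pauli_entry q n a b u v =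
       (if (\<forall>i<n. v i = (u i + a i) mod q) then omega q ^ dotp n b v else 0)" by (rule pauli_entry_eq)
    show "\<exists>cP::complex. \<forall>i\<in>{0::nat,1}. \<forall>j\<in>{0::nat,1}.
            pauli_mel q n a b (if i = 0 then ket0L cs x else ket1L cs x)
                              (if j = 0 then ket0L cs x else ket1L cs x)
            = cP * (if i = j then 1 else 0)"
    proof (cases "wt n a \<ge> 1")
      case True
      have sup: "\<And>w. ket0L cs x w \<noteq> 0 \<Longrightarrow> w \<in> C" "\<And>w. ket1L cs x w \<noteq> 0 \<Longrightarrow> w \<in> C"
        using S0 S1 by auto
      have Z: "pauli_mel q n a b \<phi> \<psi> = 0" if "\<phi> \<in> {ket0L cs x, ket1L cs x}" "\<psi> \<in> {ket0L cs x, ket1L cs x}" for \<phi> \<psi>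
      proof -
        have "\<And>w. \<phi> w \<noteq> 0 \<Longrightarrow> w \<in> C" "\<And>w. \<psi> w \<noteq> 0 \<Longrightarrow> w \<in> C" using that sup by auto
        then show ?thesis by (rule pauli_zero[OF _ _ md a(1) _ True]) (use wab pe in auto)
      qed
      show ?thesis by (intro exI[of _ 0] ballI) (auto simp: Z)
    next
      case False
      then have "wt n a = 0" by simp
      then have a0: "\<forall>i<n. a i = 0" unfolding wt_def by auto
      have pd: "pauli_mel q n a b \<phi> \<psi> = (\<Sum>u\<in>words q n. cnj (\<phi> u) * \<psi> u * omega q ^ dotp n b u)"
        for \<phi> \<psi> by (rule pauli_diag[OF a0]) (simp add: pe)
      have KER: "(\<Sum>k<m. complex_of_real (x k) * omega q ^ dotp n b (cs ! k)) = 0"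
      proof (cases "wt n b = 0")
        case True
        then have "\<forall>i<n. b i = 0" unfolding wt_def by auto
        then have "dotp n b w = 0" for w unfolding dotp_def by simp
        then show ?thesis using sumx by (simp flip: of_real_sum)
      next
        case False
        then have wb: "1 \<le> wt n b \<and> wt n b \<le> dZ - 1" using wab by simp
        have kz: "\<forall>z\<in>words q n. 1 \<le> wt n z \<and> wt n z \<le> dZ - 1 \<longrightarrow>
          (\<Sum>k<m. cos (2 * pi * real (dotp n z (cs ! k)) / real q) * x k) = 0 \<and>
          (\<Sum>k<m. sin (2 * pi * real (dotp n z (cs ! k)) / real q) * x k) = 0"
          using ker unfolding in_ker_A_def m_def by blast
        have "(\<Sum>k<m. cos (2 * pi * real (dotp n b (cs ! k)) / real q) * x k) = 0"
          "(\<Sum>k<m. sin (2 * pi * real (dotp n b (cs ! k)) / real q) * x k) = 0"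
          using mp[OF bspec[OF kz b] wb] by blast+
        from ker_complex[OF this] show ?thesis by (simp add: omega_pow)
      qed
      define cP where "cP = (\<Sum>k<m. complex_of_real (p k / X) * omega q ^ dotp n b (cs ! k))"
      have P00: "pauli_mel q n a b (ket0L cs x) (ket0L cs x) = cP"
      proof -
        have "pauli_mel q n a b (ket0L cs x) (ket0L cs x) =
          (\<Sum>k<m. cnj (ket0L cs x (cs ! k)) * ket0L cs x (cs ! k) * omega q ^ dotp n b (cs ! k))"
          unfolding pd by (rule sc) (auto simp: k0n)
        also have "\<dots> = cP" unfolding cP_def
          using p0 Xpos by (intro sum.cong refl) (simp only: lessThan_iff k0v sqc)
        finally show ?thesis .
      qed
      have P11: "pauli_mel q n a b (ket1L cs x) (ket1L cs x) = cP"
      proof -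
        have "pauli_mel q n a b (ket1L cs x) (ket1L cs x) =
          (\<Sum>k<m. cnj (ket1L cs x (cs ! k)) * ket1L cs x (cs ! k) * omega q ^ dotp n b (cs ! k))"
          unfolding pd by (rule sc) (auto simp: k1n)
        also have "\<dots> = (\<Sum>k<m. complex_of_real (mi k / X) * omega q ^ dotp n b (cs ! k))"
          using p0 Xpos by (intro sum.cong refl) (simp only: lessThan_iff k1v sqc)
        also have "\<dots> = cP"
        proof -
          define w where "w = (\<lambda>k. omega q ^ dotp n b (cs ! k))"
          have "cP - (\<Sum>k<m. complex_of_real (mi k / X) * omega q ^ dotp n b (cs ! k)) =
             (\<Sum>k<m. complex_of_real (p k / X) * w k - complex_of_real (mi k / X) * w k)"
            unfolding cP_def w_def by (simp only: sum_subtractf)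
          also have "\<dots> = (\<Sum>k<m. complex_of_real (1 / X) * (complex_of_real (x k) * w k))"
          proof (intro sum.cong refl)
            fix k
            show "complex_of_real (p k / X) * w k - complex_of_real (mi k / X) * w k =
              complex_of_real (1 / X) * (complex_of_real (x k) * w k)"
              unfolding xpm by (simp add: algebra_simps diff_divide_distrib)
          qed
          also have "\<dots> = complex_of_real (1 / X) * (\<Sum>k<m. complex_of_real (x k) * omega q ^ dotp n b (cs ! k))"
            unfolding w_def by (simp only: sum_distrib_left)
          finally have "cP - (\<Sum>k<m. complex_of_real (mi k / X) * omega q ^ dotp n b (cs ! k)) =
             complex_of_real (1 / X) * (\<Sum>k<m. complex_of_real (x k) * omega q ^ dotp n b (cs ! k))" .
          then show ?thesis using KER by simp
        qed
        finally show ?thesis .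
      qed
      have P01: "pauli_mel q n a b (ket0L cs x) (ket1L cs x) = 0"
      proof -
        have "pauli_mel q n a b (ket0L cs x) (ket1L cs x) =
          (\<Sum>k<m. cnj (ket0L cs x (cs ! k)) * ket1L cs x (cs ! k) * omega q ^ dotp n b (cs ! k))"
          unfolding pd by (rule sc) (auto simp: k1n)
        also have "\<dots> = 0"
          using p0 pmi Xpos by (intro sum.neutral ballI) (simp add: k0v k1v sqdiv flip: of_real_mult)
        finally show ?thesis .
      qed
      have P10: "pauli_mel q n a b (ket1L cs x) (ket0L cs x) = 0"
      proof -
        have "pauli_mel q n a b (ket1L cs x) (ket0L cs x) =
          (\<Sum>k<m. cnj (ket1L cs x (cs ! k)) * ket0L cs x (cs ! k) * omega q ^ dotp n b (cs ! k))"
          unfolding pd by (rule sc) (auto simp: k0n)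
        also have "\<dots> = 0"
          using p0 pmi Xpos by (intro sum.neutral ballI) (simp add: k0v k1v sqdiv mult.commute flip: of_real_mult)
        finally show ?thesis .
      qed
      show ?thesis by (intro exI[of _ cP] ballI) (auto simp: P00 P11 P01 P10)
    qed
  qed
  show ?thesis using I00 I11 I01 S0 S1 S01 PP by (intro conjI) assumption+
qed

theorem lemma2:
  fixes q n dX dZ :: nat and C :: "(nat \<Rightarrow> nat) set" and cs :: "(nat \<Rightarrow> nat) list"
  assumes "q \<ge> 2" and "n \<ge> 1" and "dX \<ge> 1" and "dZ \<ge> 1"
    and "C \<subseteq> words q n"
    and "min_dist_ge n C dX"
    and "card C \<ge> 2 * Vq q n (dZ - 1)"
    and "distinct cs" and "set cs = C"
  shows "(\<exists>x. (\<exists>k<length cs. x k \<noteq> 0) \<and> in_ker_A q n dZ cs x) \<and>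
    (\<forall>x. (\<exists>k<length cs. x k \<noteq> 0) \<and> in_ker_A q n dZ cs x \<longrightarrow>
      inner_st q n (ket0L cs x) (ket0L cs x) = 1 \<and>
      inner_st q n (ket1L cs x) (ket1L cs x) = 1 \<and>
      inner_st q n (ket0L cs x) (ket1L cs x) = 0 \<and>
      {w. ket0L cs x w \<noteq> 0} \<subseteq> C \<and> {w. ket1L cs x w \<noteq> 0} \<subseteq> C \<and>
      {w. ket0L cs x w \<noteq> 0} \<inter> {w. ket1L cs x w \<noteq> 0} = {} \<and>
      (\<forall>a\<in>words q n. \<forall>b\<in>words q n. wt n a \<le> dX - 1 \<and> wt n b \<le> dZ - 1 \<longrightarrow>
         (\<exists>cP::complex. \<forall>i\<in>{0::nat,1}. \<forall>j\<in>{0::nat,1}.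
            pauli_mel q n a b (if i = 0 then ket0L cs x else ket1L cs x)
                              (if j = 0 then ket0L cs x else ket1L cs x)
            = cP * (if i = j then 1 else 0))))"
proof
  define m where "m = length cs"
  have mC: "m = card C" unfolding m_def using assms(8,9) distinct_card by fastforce
  show "\<exists>x. (\<exists>k<length cs. x k \<noteq> 0) \<and> in_ker_A q n dZ cs x"
  proof -
    define Z where "Z = {z\<in>words q n. 1 \<le> wt n z \<and> wt n z \<le> dZ - 1}"
    define B where "B = {z\<in>words q n. wt n z \<le> dZ - 1}"
    have zB: "(\<lambda>_. 0::nat) \<in> B" unfolding B_def words_def wt_def using assms(1) by auto
    have finB: "finite B" unfolding B_def using finite_words by auto
    have "Z \<subseteq> B - {\<lambda>_. 0}" unfolding Z_def B_def wt_def by auto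
    then have "card Z \<le> card (B - {\<lambda>_. 0})" using finB by (intro card_mono) auto
    also have "\<dots> = card B - 1" using zB finB by simp
    finally have cZ: "card Z \<le> Vq q n (dZ - 1) - 1" using ball_card[of q n "dZ - 1"] unfolding B_def by linarith
    have V1: "Vq q n (dZ - 1) \<ge> 1" using ball_card[of q n "dZ - 1"] zB finB
      unfolding B_def by (metis (no_types, lifting) One_nat_def Suc_leI bot_nat_0.not_eq_extremum card_0_eq empty_iff le_zero_eq)
    have finZ: "finite Z" using finite_words unfolding Z_def by auto
    define cr where "cr = (\<lambda>z k. cos (2 * pi * real (dotp n z (cs ! k)) / real q))"
    define sr where "sr = (\<lambda>z k. sin (2 * pi * real (dotp n z (cs ! k)) / real q))"
    define E where "E = insert (\<lambda>_. 1) (cr ` Z \<union> sr ` Z)"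
    have finE: "finite E" unfolding E_def using finZ by auto
    have "card E \<le> Suc (card (cr ` Z \<union> sr ` Z))" unfolding E_def by (simp add: card_insert_le_m1 card_insert_if)
    also have "\<dots> \<le> Suc (card (cr ` Z) + card (sr ` Z))" using card_Un_le by simp
    also have "\<dots> \<le> Suc (card Z + card Z)" using card_image_le[OF finZ, of cr] card_image_le[OF finZ, of sr] by simp
    finally have "card E < card {..<m}" using cZ V1 assms(7) mC by simp
    obtain es where es: "set es = E" "distinct es" using finite_distinct_list[OF finE] by blast
    then have "length es < card {..<m}" using \<open>card E < card {..<m}\<close> distinct_card by metis
    from lin_sol[OF _ this] obtain x where x: "\<exists>k\<in>{..<m}. x k \<noteq> 0"
      "\<forall>e\<in>set es. (\<Sum>k\<in>{..<m}. e k * x k) = 0" by auto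
    have "in_ker_A q n dZ cs x"
      unfolding in_ker_A_def
    proof (intro conjI ballI impI)
      have "(\<lambda>_. 1) \<in> set es" using es(1) unfolding E_def by simp
      from bspec[OF x(2) this] show "(\<Sum>k<length cs. x k) = 0" unfolding m_def by simp
    next
      fix z assume "z \<in> words q n" "1 \<le> wt n z \<and> wt n z \<le> dZ - 1"
      then have "z \<in> Z" unfolding Z_def by auto
      then have "cr z \<in> set es" "sr z \<in> set es" using es(1) unfolding E_def by simp_all
      from bspec[OF x(2) this(1)] bspec[OF x(2) this(2)] show "(\<Sum>k<length cs. cos (2 * pi * real (dotp n z (cs ! k)) / real q) * x k) = 0"
         "(\<Sum>k<length cs. sin (2 * pi * real (dotp n z (cs ! k)) / real q) * x k) = 0"
        unfolding cr_def sr_def m_def by simp_all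
    qed
    then show ?thesis using x(1) unfolding m_def by auto
  qed
next
  show "\<forall>x. (\<exists>k<length cs. x k \<noteq> 0) \<and> in_ker_A q n dZ cs x \<longrightarrow>
      inner_st q n (ket0L cs x) (ket0L cs x) = 1 \<and>
      inner_st q n (ket1L cs x) (ket1L cs x) = 1 \<and>
      inner_st q n (ket0L cs x) (ket1L cs x) = 0 \<and>
      {w. ket0L cs x w \<noteq> 0} \<subseteq> C \<and> {w. ket1L cs x w \<noteq> 0} \<subseteq> C \<and>
      {w. ket0L cs x w \<noteq> 0} \<inter> {w. ket1L cs x w \<noteq> 0} = {} \<and>
      (\<forall>a\<in>words q n. \<forall>b\<in>words q n. wt n a \<le> dX - 1 \<and> wt n b \<le> dZ - 1 \<longrightarrow>
         (\<exists>cP::complex. \<forall>i\<in>{0::nat,1}. \<forall>j\<in>{0::nat,1}.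
            pauli_mel q n a b (if i = 0 then ket0L cs x else ket1L cs x)
                              (if j = 0 then ket0L cs x else ket1L cs x)
            = cP * (if i = j then 1 else 0)))"
    by (intro allI impI, erule conjE, rule part2[OF assms(1,5,6,8,9)])
qed

end
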